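(* Let $d\ge1$, $\varepsilon>0$, and tensors $T^{(0)}\in\mathbb C$, $T^{(j)}\in(\mathbb{C}^n)^{\otimes 2j}$ ($j\in[d]$) with $\|T^{(j)}\|_F\le1$ for all $j$. For $j\in[d]$ and $i\in[2j]$ let $M_{j,i}\in\mathbb{C}^{n\times n^{2j-1}}$ be the flattening of $T^{(j)}$ whose row index is the $i$-th tensor index, let $W_{j,i}\subseteq\mathbb{C}^n$ be the span of the left singular vectors of $M_{j,i}$ with singular value at least $\varepsilon/(d+1)^2$, and let $W$ be the span of all $W_{j,i}$ and their entrywise complex conjugates $W_{j,i}^*$ ($j\in[d]$, $i\in[2j]$). Then $\dim W\le 8(d+1)^6/\varepsilon^2$, and for every $\vec y\in\mathbb{C}^n$ with $\|\vec y\|_2\le1$, \[ |f(\vec y)-f(\Pi_W\vec y)|\le\varepsilon, \] where $\Pi_W$ is the orthogonal projection onto $W$ and $f(\vec x)=T^{(0)}+\sum_{j=1}^d\langle T^{(j)},(\vec x^* )^{\otimes j}\otimes\vec x^{\otimes j}\rangle$.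
   Context: $\vec x^*$ is the entrywise complex conjugate. For tensors of the same shape, $\langle A,B\rangle=\sum_{\text{indices}}A_{i_1\dots i_k}B_{i_1\dots i_k}$ (bilinear, no conjugation). $\|\cdot\|_F$ is the Frobenius norm (square root of the sum of squared magnitudes of entries). *)

theory Defs
  imports "HOL-Analysis.Analysis" "HOL-Library.Function_Algebras"
begin

text \<open>Vectors in C^n are functions 'n => complex for a finite index type 'n (n = CARD('n)).
  Tensors in (C^n)^(tensor k) are functions 'n list => complex, only their values on lists
  of length k being relevant.\<close>

definition cscale :: "complex \<Rightarrow> ('n \<Rightarrow> complex) \<Rightarrow> ('n \<Rightarrow> complex)" where
  "cscale c v = (\<lambda>k. c * v k)"

definition cspan :: "('n \<Rightarrow> complex) set \<Rightarrow> ('n \<Rightarrow> complex) set" where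
  "cspan S = module.span cscale S"

definition cdim :: "('n \<Rightarrow> complex) set \<Rightarrow> nat" where
  "cdim S = vector_space.dim cscale S"

definition hinner :: "('n::finite \<Rightarrow> complex) \<Rightarrow> ('n \<Rightarrow> complex) \<Rightarrow> complex" where
  "hinner u v = (\<Sum>k\<in>UNIV. cnj (u k) * v k)"

definition vnorm2 :: "('n::finite \<Rightarrow> complex) \<Rightarrow> real" where
  "vnorm2 v = sqrt (\<Sum>k\<in>UNIV. (cmod (v k))\<^sup>2)"

definition vconj :: "('n \<Rightarrow> complex) \<Rightarrow> ('n \<Rightarrow> complex)" where
  "vconj v = (\<lambda>k. cnj (v k))"

definition orth_proj :: "('n::finite \<Rightarrow> complex) set \<Rightarrow> ('n \<Rightarrow> complex) \<Rightarrow> ('n \<Rightarrow> complex)" where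
  "orth_proj W y = (THE p. p \<in> W \<and> (\<forall>w\<in>W. hinner w (y - p) = 0))"

definition frob :: "nat \<Rightarrow> ('n::finite list \<Rightarrow> complex) \<Rightarrow> real" where
  "frob k T = sqrt (\<Sum>xs\<in>{xs. length xs = k}. (cmod (T xs))\<^sup>2)"

text \<open>Flattening of an order-k tensor with the i-th index (0-based, i < k) as row index:
  a matrix with rows indexed by 'n and columns by lists of length k-1.
  flat_mul: M v ;  flat_adj_mul: M^H u.\<close>
definition ins_at :: "nat \<Rightarrow> 'n \<Rightarrow> 'n list \<Rightarrow> 'n list" where
  "ins_at i a rest = take i rest @ a # drop i rest"

definition flat_mul :: "nat \<Rightarrow> nat \<Rightarrow> ('n::finite list \<Rightarrow> complex) \<Rightarrow> ('n list \<Rightarrow> complex) \<Rightarrow> ('n \<Rightarrow> complex)" where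
  "flat_mul k i T v = (\<lambda>a. \<Sum>rest\<in>{rs. length rs = k - 1}. T (ins_at i a rest) * v rest)"

definition flat_adj_mul :: "nat \<Rightarrow> nat \<Rightarrow> ('n::finite list \<Rightarrow> complex) \<Rightarrow> ('n \<Rightarrow> complex) \<Rightarrow> ('n list \<Rightarrow> complex)" where
  "flat_adj_mul k i T u = (\<lambda>rest. \<Sum>a\<in>UNIV. cnj (T (ins_at i a rest)) * u a)"

definition left_sing_vecs_ge :: "nat \<Rightarrow> nat \<Rightarrow> ('n::finite list \<Rightarrow> complex) \<Rightarrow> real \<Rightarrow> ('n \<Rightarrow> complex) set" where
  "left_sing_vecs_ge k i T \<delta> = {u. u \<noteq> 0 \<and> (\<exists>\<sigma>::real. \<sigma> \<ge> \<delta> \<and> (\<exists>v. 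
      flat_mul k i T v = (\<lambda>a. complex_of_real \<sigma> * u a) \<and>
      (\<forall>rest. length rest = k - 1 \<longrightarrow> flat_adj_mul k i T u rest = complex_of_real \<sigma> * v rest)))}"

definition Wsub :: "nat \<Rightarrow> nat \<Rightarrow> ('n::finite list \<Rightarrow> complex) \<Rightarrow> real \<Rightarrow> ('n \<Rightarrow> complex) set" where
  "Wsub k i T \<delta> = cspan (left_sing_vecs_ge k i T \<delta>)"

definition polyf :: "nat \<Rightarrow> complex \<Rightarrow> (nat \<Rightarrow> 'n::finite list \<Rightarrow> complex) \<Rightarrow> ('n \<Rightarrow> complex) \<Rightarrow> complex" where
  "polyf d T0 T x = T0 + (\<Sum>j=1..d. \<Sum>xs\<in>{xs. length xs = 2*j}.
      T j xs * (\<Prod>k<j. cnj (x (xs!k))) * (\<Prod>k\<in>{j..<2*j}. x (xs!k)))"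

end

theory Submission
  imports Defs
begin


lemma sum_fun_apply: "(sum f A) k = sum (\<lambda>a. f a k) A"
  by (induction A rule: infinite_finite_induct) auto

lemma cscale_apply: "cscale c v k = c * v k"
  by (simp add: cscale_def)

interpretation cv: vector_space cscale
  by unfold_locales (auto simp: cscale_def fun_eq_iff algebra_simps)

lemma cspan_eq: "cspan S = cv.span S" by (simp add: cspan_def)
lemma cdim_eq: "cdim S = cv.dim S" by (simp add: cdim_def)

definition ebas :: "'n \<Rightarrow> 'n \<Rightarrow> complex" where "ebas k = (\<lambda>j. if j = k then 1 else 0)"

lemma vec_expand: "(v::'n::finite \<Rightarrow> complex) = (\<Sum>k\<in>UNIV. cscale (v k) (ebas k))"
  by (auto simp: fun_eq_iff sum_fun_apply ebas_def if_distrib cscale_apply cong: if_cong)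

lemma span_ebas: "cv.span (range ebas) = (UNIV :: ('n::finite \<Rightarrow> complex) set)"
proof -
  have "v \<in> cv.span (range ebas)" for v :: "'n \<Rightarrow> complex"
    by (subst vec_expand) (intro cv.span_sum cv.span_scale cv.span_base, auto)
  then show ?thesis by auto
qed

lemma indep_finite: "cv.independent (B :: ('n::finite \<Rightarrow> complex) set) \<Longrightarrow> finite B"
  using cv.independent_span_bound[of "range ebas" B] span_ebas by auto

lemma hinner_add_left: "hinner (x + y) z = hinner x z + hinner y z"
  by (simp add: hinner_def algebra_simps sum.distrib)
lemma hinner_add_right: "hinner x (y + z) = hinner x y + hinner x z"
  by (simp add: hinner_def algebra_simps sum.distrib)
lemma hinner_diff_left: "hinner (x - y) z = hinner x z - hinner y z"
  by (simp add: hinner_def algebra_simps sum_subtractf)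
lemma hinner_diff_right: "hinner x (y - z) = hinner x y - hinner x z"
  by (simp add: hinner_def algebra_simps sum_subtractf)
lemma hinner_scale_left: "hinner (cscale c x) y = cnj c * hinner x y"
  by (simp add: hinner_def algebra_simps sum_distrib_left cscale_apply)
lemma hinner_scale_right: "hinner x (cscale c y) = c * hinner x y"
  by (simp add: hinner_def algebra_simps sum_distrib_left cscale_apply)
lemma hinner_zero_left[simp]: "hinner 0 y = 0" by (simp add: hinner_def)
lemma hinner_zero_right[simp]: "hinner x 0 = 0" by (simp add: hinner_def)
lemma hinner_sum_left: "hinner (sum f A) y = (\<Sum>a\<in>A. hinner (f a) y)"
  unfolding hinner_def sum_fun_apply by (simp add: cnj_sum sum_distrib_right sum.swap[of _ UNIV])
lemma hinner_sum_right: "hinner y (sum f A) = (\<Sum>a\<in>A. hinner y (f a))"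
  unfolding hinner_def sum_fun_apply by (simp add: sum_distrib_left sum.swap[of _ UNIV])
lemma hinner_commute: "hinner y x = cnj (hinner x y)"
  by (simp add: hinner_def mult.commute)
lemma vnorm2_nonneg: "vnorm2 x \<ge> 0" unfolding vnorm2_def by (intro real_sqrt_ge_zero sum_nonneg) simp
lemma vnorm2_sq: "(vnorm2 x)\<^sup>2 = (\<Sum>k\<in>UNIV. (cmod (x k))\<^sup>2)"
  unfolding vnorm2_def by (rule real_sqrt_pow2) (simp add: sum_nonneg)
lemma hinner_self: "hinner x x = complex_of_real ((vnorm2 x)\<^sup>2)"
proof -
  have "hinner x x = (\<Sum>k\<in>UNIV. complex_of_real ((cmod (x k))\<^sup>2))"
    unfolding hinner_def by (intro sum.cong refl) (metis complex_norm_square mult.commute of_real_power)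
  also have "\<dots> = complex_of_real (\<Sum>k\<in>UNIV. (cmod (x k))\<^sup>2)" by simp
  finally show ?thesis by (simp only: vnorm2_sq)
qed
lemma vnorm2_zero_iff: "vnorm2 x = 0 \<longleftrightarrow> x = 0"
proof
  assume "vnorm2 x = 0"
  then have "(\<Sum>k\<in>UNIV. (cmod (x k))\<^sup>2) = 0" using vnorm2_sq[of x] by simp
  then have "\<forall>k\<in>UNIV. (cmod (x k))\<^sup>2 = 0" by (subst (asm) sum_nonneg_eq_0_iff) auto
  then show "x = 0" by (auto simp: fun_eq_iff)
qed (simp add: vnorm2_def)
lemma hinner_self_eq_0: "hinner x x = 0 \<longleftrightarrow> x = 0"
  using vnorm2_zero_iff[of x] by (simp add: hinner_self)
lemma vnorm2_scale: "vnorm2 (cscale c x) = cmod c * vnorm2 x"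
proof -
  have "(vnorm2 (cscale c x))\<^sup>2 = (cmod c * vnorm2 x)\<^sup>2"
    by (simp add: vnorm2_sq power_mult_distrib norm_mult sum_distrib_left cscale_apply)
  then show ?thesis using vnorm2_nonneg[of x] vnorm2_nonneg[of "cscale c x"]
    by (simp add: power2_eq_iff_nonneg)
qed
lemma vnorm2_vconj: "vnorm2 (vconj x) = vnorm2 x" by (simp add: vnorm2_def vconj_def)
lemma vconj_vconj[simp]: "vconj (vconj x) = x" by (simp add: vconj_def)
lemma hinner_vconj: "hinner (vconj x) (vconj y) = cnj (hinner x y)"
  by (simp add: hinner_def vconj_def)




definition orthon :: "('n::finite \<Rightarrow> complex) set \<Rightarrow> bool" where
  "orthon E \<longleftrightarrow> (\<forall>e\<in>E. \<forall>f\<in>E. hinner e f = (if e = f then 1 else 0))"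

lemma cnj_mult_self: "cnj z * z = complex_of_real ((cmod z)\<^sup>2)"
  by (metis complex_norm_square mult.commute of_real_power)

lemma orth_span:
  assumes "\<forall>e\<in>E. hinner e z = 0" "w \<in> cv.span E"
  shows "hinner w z = 0"
proof -
  have "cv.subspace {w. hinner w z = 0}"
    by (auto simp: cv.subspace_def hinner_add_left hinner_scale_left)
  then have "cv.span E \<subseteq> {w. hinner w z = 0}" using assms(1) by (intro cv.span_minimal) auto
  then show ?thesis using assms(2) by auto
qed

lemma proj_orth:
  assumes "finite E" "orthon E" "e' \<in> E"
  shows "hinner e' (\<Sum>e\<in>E. cscale (hinner e x) e) = hinner e' x"
proof -
  have "hinner e' (\<Sum>e\<in>E. cscale (hinner e x) e) = (\<Sum>e\<in>E. hinner e x * hinner e' e)"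
    by (simp add: hinner_sum_right hinner_scale_right)
  also have "\<dots> = (\<Sum>e\<in>E. if e = e' then hinner e' x else 0)"
    using assms by (intro sum.cong refl) (auto simp: orthon_def)
  also have "\<dots> = hinner e' x" using assms by simp
  finally show ?thesis .
qed

lemma vnorm2_sq_hinner: "complex_of_real ((vnorm2 x)\<^sup>2) = hinner x x"
  by (simp add: hinner_self)

lemma bessel:
  assumes "finite E" "orthon E"
  shows "(\<Sum>e\<in>E. (cmod (hinner e c))\<^sup>2) \<le> (vnorm2 c)\<^sup>2"
proof -
  define p where "p = (\<Sum>e\<in>E. cscale (hinner e c) e)"
  define S where "S = (\<Sum>e\<in>E. (cmod (hinner e c))\<^sup>2)"
  have pe: "hinner e p = hinner e c" if "e \<in> E" for e
    using proj_orth[OF assms that] by (simp add: p_def)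
  have pp: "hinner p p = complex_of_real S"
  proof -
    have "hinner p p = (\<Sum>e\<in>E. cnj (hinner e c) * hinner e p)"
      by (simp add: p_def[of] hinner_sum_left hinner_scale_left)
    also have "\<dots> = (\<Sum>e\<in>E. complex_of_real ((cmod (hinner e c))\<^sup>2))"
      by (intro sum.cong refl) (simp add: pe cnj_mult_self)
    finally show ?thesis by (simp add: S_def)
  qed
  have pc: "hinner p c = complex_of_real S"
  proof -
    have "hinner p c = (\<Sum>e\<in>E. cnj (hinner e c) * hinner e c)"
      by (simp add: p_def hinner_sum_left hinner_scale_left)
    also have "\<dots> = (\<Sum>e\<in>E. complex_of_real ((cmod (hinner e c))\<^sup>2))"
      by (intro sum.cong refl) (simp add: cnj_mult_self)
    finally show ?thesis by (simp add: S_def)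
  qed
  have cp: "hinner c p = complex_of_real S"
    using pc by (subst hinner_commute) simp
  have "complex_of_real ((vnorm2 (c - p))\<^sup>2) = hinner (c - p) (c - p)" by (simp add: hinner_self)
  also have "\<dots> = hinner c c - complex_of_real S"
    by (simp add: hinner_diff_left hinner_diff_right pp pc cp)
  also have "\<dots> = complex_of_real ((vnorm2 c)\<^sup>2 - S)" by (simp add: hinner_self)
  finally have "(vnorm2 (c - p))\<^sup>2 = (vnorm2 c)\<^sup>2 - S" using of_real_eq_iff by blast
  then show ?thesis unfolding S_def[symmetric] by (metis diff_ge_0_iff_ge zero_le_power2)
qed

lemma gram_schmidt:
  assumes "finite B" "cv.independent B"
  shows "\<exists>E. finite E \<and> orthon E \<and> card E = card B \<and> cv.span E = cv.span B"
  using assms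
proof (induction B rule: finite_induct)
  case empty
  then show ?case by (intro exI[of _ "{}"]) (auto simp: orthon_def)
next
  case (insert x B)
  have indB: "cv.independent B" and xB: "x \<notin> cv.span B"
    using insert.prems insert.hyps(2) by (simp_all add: cv.independent_insert)
  obtain E where E: "finite E" "orthon E" "card E = card B" "cv.span E = cv.span B"
    using insert.IH indB by blast
  define p where "p = (\<Sum>e\<in>E. cscale (hinner e x) e)"
  define h where "h = x - p"
  have pspan: "p \<in> cv.span E" unfolding p_def
    by (intro cv.span_sum cv.span_scale cv.span_base)
  have hne: "h \<noteq> 0"
  proof
    assume "h = 0"
    then have "x = p" by (simp add: h_def)
    then show False using pspan E(4) xB by simp
  qed
  have he: "hinner e h = 0" if "e \<in> E" for e
    using proj_orth[OF E(1,2) that, of x] by (simp add: h_def p_def hinner_diff_right)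
  define nh where "nh = vnorm2 h"
  have nhpos: "nh > 0" using hne vnorm2_zero_iff[of h] vnorm2_nonneg[of h] by (simp add: nh_def)
  define e' where "e' = cscale (complex_of_real (1 / nh)) h"
  have e'e: "hinner e e' = 0" if "e \<in> E" for e
    using he[OF that] by (simp add: e'_def hinner_scale_right)
  have ee'[simp]: "hinner e' e = 0" if "e \<in> E" for e
    using e'e[OF that] by (subst hinner_commute) simp
  have e'e': "hinner e' e' = 1"
  proof -
    have "hinner e' e' = complex_of_real (1/nh) * complex_of_real (1/nh) * hinner h h"
      by (simp add: e'_def hinner_scale_left hinner_scale_right)
    also have "\<dots> = 1" using nhpos by (simp add: hinner_self nh_def[symmetric] power2_eq_square field_simps)
    finally show ?thesis .
  qed
  have e'E: "e' \<notin> E"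
  proof
    assume "e' \<in> E"
    then have "hinner e' e' = 0" using e'e by blast
    with e'e' show False by simp
  qed
  have orth: "orthon (insert e' E)"
    unfolding orthon_def
  proof (intro ballI)
    fix a b assume a: "a \<in> insert e' E" and b: "b \<in> insert e' E"
    show "hinner a b = (if a = b then 1 else 0)"
    proof (cases "a = e'")
      case True
      then show ?thesis using b e'e' ee' e'E by auto
    next
      case False
      then have aE: "a \<in> E" using a by simp
      show ?thesis
      proof (cases "b = e'")
        case True
        then show ?thesis using aE e'e e'E by auto
      next
        case False
        then show ?thesis using aE b E(2) unfolding orthon_def by simp
      qed
    qed
  qed
  have span_eq: "cv.span (insert e' E) = cv.span (insert x B)"
  proof -
    have px: "p \<in> cv.span (insert x E)" using pspan cv.span_mono[of E "insert x E"] by auto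
    have xx: "x \<in> cv.span (insert x E)" by (rule cv.span_base) simp
    have "e' \<in> cv.span (insert x E)"
      unfolding e'_def h_def by (intro cv.span_scale cv.span_diff xx px)
    then obtain k where "e' - cscale k x \<in> cv.span E" using cv.span_breakdown_eq by blast
    then have 1: "e' \<in> cv.span (insert x B)"
      using E(4) cv.span_breakdown_eq[of e' x B] by auto
    have "cscale (complex_of_real nh) e' = h"
      using nhpos by (simp add: e'_def fun_eq_iff cscale_apply)
    then have "x = cscale (complex_of_real nh) e' + p" by (simp add: h_def)
    moreover have "cscale (complex_of_real nh) e' + p \<in> cv.span (insert e' E)"
      using pspan cv.span_mono[of E "insert e' E"]
      by (intro cv.span_add cv.span_scale) (auto intro: cv.span_base)
    ultimately have 2: "x \<in> cv.span (insert e' E)" by simp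
    show ?thesis unfolding cv.span_eq
    proof
      show "insert e' E \<subseteq> cv.span (insert x B)"
        using 1 E(4) cv.span_mono[of B "insert x B"] cv.span_superset[of E] by auto
      show "insert x B \<subseteq> cv.span (insert e' E)"
        using 2 E(4) cv.span_mono[of E "insert e' E"] cv.span_superset[of B] by auto
    qed
  qed
  show ?case
    by (intro exI[of _ "insert e' E"]) (simp add: E e'E orth span_eq insert.hyps)
qed

lemma dim_bound_orthon:
  assumes "\<And>E. finite E \<Longrightarrow> orthon E \<Longrightarrow> E \<subseteq> cv.span X \<Longrightarrow> card E \<le> N"
  shows "cv.dim X \<le> N"
proof -
  obtain B where B: "B \<subseteq> cv.span X" "cv.independent B" "cv.span X \<subseteq> cv.span B" "card B = cv.dim (cv.span X)"
    using cv.basis_exists by blast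
  have fB: "finite B" using indep_finite[OF B(2)] .
  obtain E where E: "finite E" "orthon E" "card E = card B" "cv.span E = cv.span B"
    using gram_schmidt[OF fB B(2)] by blast
  have "E \<subseteq> cv.span X" using E(4) cv.span_superset[of E] cv.span_mono[OF B(1)] by (auto simp: cv.span_span)
  then have "card E \<le> N" using assms E(1,2) by blast
  then show ?thesis using E(3) B(4) by simp
qed

lemma orthon_basis_of_span:
  "\<exists>E. finite E \<and> orthon E \<and> cv.span E = cv.span (X :: ('n::finite \<Rightarrow> complex) set)"
proof -
  obtain B where B: "B \<subseteq> cv.span X" "cv.independent B" "cv.span X \<subseteq> cv.span B" "card B = cv.dim (cv.span X)"
    using cv.basis_exists by blast
  have fB: "finite B" using indep_finite[OF B(2)] .
  obtain E where E: "finite E" "orthon E" "card E = card B" "cv.span E = cv.span B"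
    using gram_schmidt[OF fB B(2)] by blast
  have "cv.span B = cv.span X"
    using B(1,3) by (metis cv.span_mono cv.span_span subset_antisym)
  then show ?thesis using E by auto
qed

lemma orth_proj_props:
  fixes X :: "('n::finite \<Rightarrow> complex) set"
  shows "orth_proj (cv.span X) y \<in> cv.span X \<and> (\<forall>w\<in>cv.span X. hinner w (y - orth_proj (cv.span X) y) = 0)"
proof -
  obtain E where E: "finite E" "orthon E" "cv.span E = cv.span X" using orthon_basis_of_span by blast
  define p where "p = (\<Sum>e\<in>E. cscale (hinner e y) e)"
  have pin: "p \<in> cv.span X" unfolding p_def E(3)[symmetric]
    by (intro cv.span_sum cv.span_scale cv.span_base)
  have porth: "\<forall>w\<in>cv.span X. hinner w (y - p) = 0"
  proof
    fix w assume "w \<in> cv.span X"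
    then have w: "w \<in> cv.span E" using E(3) by simp
    have "\<forall>e\<in>E. hinner e (y - p) = 0"
      using proj_orth[OF E(1,2)] by (simp add: hinner_diff_right p_def)
    then show "hinner w (y - p) = 0" using orth_span w by blast
  qed
  have uniq: "q = p" if "q \<in> cv.span X" "\<forall>w\<in>cv.span X. hinner w (y - q) = 0" for q
  proof -
    have d: "p - q \<in> cv.span X" using pin that(1) by (rule cv.span_diff)
    have "hinner (p - q) (p - q) = hinner (p - q) (y - q) - hinner (p - q) (y - p)"
      by (simp add: hinner_diff_right)
    also have "\<dots> = 0" using d that(2) porth by simp
    finally show ?thesis using hinner_self_eq_0[of "p - q"] by simp
  qed
  have "orth_proj (cv.span X) y = p"
    unfolding orth_proj_def
    apply (rule the_equality)
    using pin porth apply blast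
    using uniq by blast
  then show ?thesis using pin porth by simp
qed

lemma pythag:
  assumes "hinner w z = 0"
  shows "(vnorm2 (w + z))\<^sup>2 = (vnorm2 w)\<^sup>2 + (vnorm2 z)\<^sup>2"
proof -
  have zw: "hinner z w = 0" using assms by (subst hinner_commute) simp
  have "complex_of_real ((vnorm2 (w + z))\<^sup>2) = hinner (w + z) (w + z)" by (simp add: hinner_self)
  also have "\<dots> = hinner w w + hinner z z" by (simp add: hinner_add_left hinner_add_right assms zw)
  also have "\<dots> = complex_of_real ((vnorm2 w)\<^sup>2 + (vnorm2 z)\<^sup>2)" by (simp add: hinner_self)
  finally show ?thesis using of_real_eq_iff by blast
qed




abbreviation LL :: "nat \<Rightarrow> 'n list set" where "LL m \<equiv> {xs. length xs = m}"

lemma finite_LL: "finite (LL m :: 'n::finite list set)"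
  using finite_lists_length_eq[of "UNIV :: 'n set" m] by simp

lemma length_ins_at: "i \<le> length rest \<Longrightarrow> length (ins_at i a rest) = Suc (length rest)"
  by (simp add: ins_at_def)

lemma nth_ins_at_lt: "k < i \<Longrightarrow> i \<le> length rest \<Longrightarrow> ins_at i a rest ! k = rest ! k"
  by (simp add: ins_at_def nth_append)

lemma nth_ins_at_eq: "i \<le> length rest \<Longrightarrow> ins_at i a rest ! i = a"
  by (simp add: ins_at_def nth_append)

lemma nth_ins_at_gt: "i \<le> k \<Longrightarrow> k < length rest \<Longrightarrow> ins_at i a rest ! Suc k = rest ! k"
  by (simp add: ins_at_def nth_append min_def)

lemma sum_ins:
  assumes "i < K"
  shows "(\<Sum>xs\<in>LL K. F xs) = (\<Sum>a\<in>(UNIV::'n::finite set). \<Sum>rest\<in>LL (K - 1). F (ins_at i a rest))"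
proof -
  have bij: "bij_betw (\<lambda>(a, rest). ins_at i a rest) (UNIV \<times> LL (K - 1)) (LL K)"
  proof (rule bij_betw_byWitness[where f' = "\<lambda>xs. (xs ! i, take i xs @ drop (Suc i) xs)"])
    show "\<forall>p\<in>UNIV \<times> LL (K - 1). (\<lambda>xs. (xs ! i, take i xs @ drop (Suc i) xs)) ((\<lambda>(a, rest). ins_at i a rest) p) = p"
      using assms by (auto simp: ins_at_def nth_append)
    show "\<forall>xs\<in>LL K. (\<lambda>(a, rest). ins_at i a rest) ((\<lambda>xs. (xs ! i, take i xs @ drop (Suc i) xs)) xs) = xs"
      using assms by (auto simp: ins_at_def id_take_nth_drop[symmetric])
    show "(\<lambda>(a, rest). ins_at i a rest) ` (UNIV \<times> LL (K - 1)) \<subseteq> LL K"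
      using assms by (auto simp: ins_at_def)
    show "(\<lambda>xs. (xs ! i, take i xs @ drop (Suc i) xs)) ` LL K \<subseteq> UNIV \<times> LL (K - 1)"
      using assms by auto
  qed
  have "(\<Sum>xs\<in>LL K. F xs) = (\<Sum>p\<in>UNIV \<times> LL (K - 1). F ((\<lambda>(a, rest). ins_at i a rest) p))"
    using sum.reindex_bij_betw[OF bij, of F] by simp
  also have "\<dots> = (\<Sum>a\<in>UNIV. \<Sum>rest\<in>LL (K - 1). F (ins_at i a rest))"
    by (simp add: sum.cartesian_product case_prod_beta)
  finally show ?thesis .
qed

lemma sum_LL_prod:
  "(\<Sum>rs\<in>LL m. \<Prod>k<m. u k (rs ! k)) = (\<Prod>k<m. \<Sum>a\<in>(UNIV::'n::finite set). (u k a :: 'c::comm_semiring_1))"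
proof (induction m arbitrary: u)
  case 0
  then show ?case by simp
next
  case (Suc m)
  have "(\<Sum>rs\<in>LL (Suc m). \<Prod>k<Suc m. u k (rs ! k))
      = (\<Sum>a\<in>(UNIV::'n set). \<Sum>rest\<in>LL m. \<Prod>k<Suc m. u k ((a # rest) ! k))"
    using sum_ins[of 0 "Suc m" "\<lambda>rs. \<Prod>k<Suc m. u k (rs ! k)"] by (simp add: ins_at_def)
  also have "\<dots> = (\<Sum>a\<in>(UNIV::'n set). u 0 a * (\<Sum>rest\<in>LL m. \<Prod>k<m. u (Suc k) (rest ! k)))"
    by (simp only: prod.lessThan_Suc_shift nth_Cons_0 nth_Cons_Suc sum_distrib_left)
  also have "\<dots> = (\<Sum>a\<in>(UNIV::'n set). u 0 a) * (\<Prod>k<m. \<Sum>a\<in>(UNIV::'n set). u (Suc k) a)"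
    using Suc.IH[of "\<lambda>k. u (Suc k)"] by (simp add: sum_distrib_right)
  also have "\<dots> = (\<Prod>k<Suc m. \<Sum>a\<in>(UNIV::'n set). u k a)"
    by (simp only: prod.lessThan_Suc_shift)
  finally show ?case .
qed

lemma prod_telescope:
  fixes a b :: "nat \<Rightarrow> 'c::comm_ring_1"
  shows "(\<Prod>k<K. a k) - (\<Prod>k<K. b k) = (\<Sum>i<K. (\<Prod>k<i. b k) * (a i - b i) * (\<Prod>k\<in>{Suc i..<K}. a k))"
proof (induction K)
  case 0
  then show ?case by simp
next
  case (Suc K)
  have e: "(\<Prod>k\<in>{Suc i..<Suc K}. a k) = (\<Prod>k\<in>{Suc i..<K}. a k) * a K" if "i < K" for i
    using that by (simp add: prod.atLeastLessThan_Suc)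
  have "(\<Prod>k<Suc K. a k) - (\<Prod>k<Suc K. b k) = ((\<Prod>k<K. a k) - (\<Prod>k<K. b k)) * a K + (\<Prod>k<K. b k) * (a K - b K)"
    by (simp add: algebra_simps)
  also have "\<dots> = (\<Sum>i<K. (\<Prod>k<i. b k) * (a i - b i) * (\<Prod>k\<in>{Suc i..<K}. a k) * a K) + (\<Prod>k<K. b k) * (a K - b K)"
    by (simp add: Suc.IH sum_distrib_right)
  also have "\<dots> = (\<Sum>i<Suc K. (\<Prod>k<i. b k) * (a i - b i) * (\<Prod>k\<in>{Suc i..<Suc K}. a k))"
    by (simp add: e mult.assoc)
  finally show ?case .
qed

definition mlf :: "nat \<Rightarrow> ('n::finite list \<Rightarrow> complex) \<Rightarrow> (nat \<Rightarrow> 'n \<Rightarrow> complex) \<Rightarrow> complex" where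
  "mlf K T vs = (\<Sum>xs\<in>LL K. T xs * (\<Prod>k<K. vs k (xs ! k)))"

definition hyb :: "(nat \<Rightarrow> 'n \<Rightarrow> complex) \<Rightarrow> (nat \<Rightarrow> 'n \<Rightarrow> complex) \<Rightarrow> nat \<Rightarrow> nat \<Rightarrow> 'n \<Rightarrow> complex" where
  "hyb a b i = (\<lambda>k. if k < i then b k else if k = i then a i - b i else a k)"

lemma prod_split3:
  assumes "i < K"
  shows "(\<Prod>k<K. g k) = (\<Prod>k<i. g k) * g i * (\<Prod>k\<in>{Suc i..<K}. (g k :: 'c::comm_monoid_mult))"
proof -
  have "{..<K} = {..<i} \<union> {i..<K}" using assms by auto
  then have "(\<Prod>k<K. g k) = (\<Prod>k<i. g k) * (\<Prod>k\<in>{i..<K}. g k)"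
    by (simp add: prod.union_disjoint ivl_disj_int)
  also have "(\<Prod>k\<in>{i..<K}. g k) = g i * (\<Prod>k\<in>{Suc i..<K}. g k)"
    using assms by (simp add: prod.atLeast_Suc_lessThan)
  finally show ?thesis by (simp add: mult.assoc)
qed

lemma mlf_telescope:
  "mlf K T a - mlf K T b = (\<Sum>i<K. mlf K T (hyb a b i))"
proof -
  have "mlf K T a - mlf K T b = (\<Sum>xs\<in>LL K. T xs * ((\<Prod>k<K. a k (xs ! k)) - (\<Prod>k<K. b k (xs ! k))))"
    by (simp add: mlf_def sum_subtractf algebra_simps)
  also have "\<dots> = (\<Sum>xs\<in>LL K. \<Sum>i<K. T xs * (\<Prod>k<K. hyb a b i k (xs ! k)))"
  proof (intro sum.cong refl)
    fix xs :: "'a list"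
    have "(\<Prod>k<K. a k (xs ! k)) - (\<Prod>k<K. b k (xs ! k))
       = (\<Sum>i<K. (\<Prod>k<i. b k (xs ! k)) * (a i (xs ! i) - b i (xs ! i)) * (\<Prod>k\<in>{Suc i..<K}. a k (xs ! k)))"
      by (rule prod_telescope)
    also have "\<dots> = (\<Sum>i<K. \<Prod>k<K. hyb a b i k (xs ! k))"
    proof (intro sum.cong refl)
      fix i assume "i \<in> {..<K}"
      then have iK: "i < K" by simp
      have "(\<Prod>k<K. hyb a b i k (xs ! k)) = (\<Prod>k<i. hyb a b i k (xs ! k)) * hyb a b i i (xs ! i) * (\<Prod>k\<in>{Suc i..<K}. hyb a b i k (xs ! k))"
        by (rule prod_split3[OF iK])
      also have "\<dots> = (\<Prod>k<i. b k (xs ! k)) * (a i (xs ! i) - b i (xs ! i)) * (\<Prod>k\<in>{Suc i..<K}. a k (xs ! k))"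
        by (simp add: hyb_def)
      finally show "(\<Prod>k<i. b k (xs ! k)) * (a i (xs ! i) - b i (xs ! i)) * (\<Prod>k\<in>{Suc i..<K}. a k (xs ! k)) = (\<Prod>k<K. hyb a b i k (xs ! k))" by simp
    qed
    finally show "T xs * ((\<Prod>k<K. a k (xs ! k)) - (\<Prod>k<K. b k (xs ! k))) = (\<Sum>i<K. T xs * (\<Prod>k<K. hyb a b i k (xs ! k)))"
      by (simp add: sum_distrib_left)
  qed
  also have "\<dots> = (\<Sum>i<K. mlf K T (hyb a b i))"
    unfolding mlf_def by (rule sum.swap)
  finally show ?thesis .
qed




lemma prod_remove:
  assumes "i < K"
  shows "(\<Prod>k<K. g k) = g i * (\<Prod>k<K - 1. g (if k < i then k else Suc k)) * (1::'c::comm_monoid_mult)"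
proof -
  have "{..<K - 1} = {..<i} \<union> {i..<K - 1}" using assms by auto
  then have "(\<Prod>k<K - 1. g (if k < i then k else Suc k)) = (\<Prod>k<i. g (if k < i then k else Suc k)) * (\<Prod>k\<in>{i..<K - 1}. g (if k < i then k else Suc k))"
    by (simp add: prod.union_disjoint ivl_disj_int)
  also have "(\<Prod>k<i. g (if k < i then k else Suc k)) = (\<Prod>k<i. g k)" by (intro prod.cong) auto
  also have "(\<Prod>k\<in>{i..<K - 1}. g (if k < i then k else Suc k)) = (\<Prod>k\<in>{i..<K - 1}. g (Suc k))" by (intro prod.cong) auto
  also have "\<dots> = (\<Prod>k\<in>{Suc i..<K}. g k)"
    using assms prod.shift_bounds_Suc_ivl[of g i "K - 1"] by simp
  finally show ?thesis using prod_split3[OF assms, of g] by (simp add: ac_simps)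
qed

lemma mlf_as_adj:
  fixes vs :: "nat \<Rightarrow> 'n::finite \<Rightarrow> complex"
  assumes "i < K"
  shows "mlf K T vs = (\<Sum>rest\<in>LL (K - 1). (\<Prod>k<K - 1. vs (if k < i then k else Suc k) (rest ! k))
                      * cnj (flat_adj_mul K i T (vconj (vs i)) rest))"
proof -
  have "mlf K T vs = (\<Sum>a\<in>UNIV. \<Sum>rest\<in>LL (K - 1). T (ins_at i a rest) * (\<Prod>k<K. vs k (ins_at i a rest ! k)))"
    unfolding mlf_def by (rule sum_ins[OF assms])
  also have "\<dots> = (\<Sum>a\<in>UNIV. \<Sum>rest\<in>LL (K - 1). T (ins_at i a rest) * vs i a * (\<Prod>k<K - 1. vs (if k < i then k else Suc k) (rest ! k)))"
  proof (intro sum.cong refl)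
    fix a :: 'n and rest :: "'n list" assume "rest \<in> LL (K - 1)"
    then have lr: "length rest = K - 1" by simp
    have "(\<Prod>k<K. vs k (ins_at i a rest ! k)) = vs i (ins_at i a rest ! i) * (\<Prod>k<K - 1. vs (if k < i then k else Suc k) (ins_at i a rest ! (if k < i then k else Suc k))) * 1"
      by (rule prod_remove[OF assms])
    also have "\<dots> = vs i a * (\<Prod>k<K - 1. vs (if k < i then k else Suc k) (rest ! k))"
    proof -
      have "(\<Prod>k<K - 1. vs (if k < i then k else Suc k) (ins_at i a rest ! (if k < i then k else Suc k)))
          = (\<Prod>k<K - 1. vs (if k < i then k else Suc k) (rest ! k))"
        using assms lr by (intro prod.cong refl) (auto simp: nth_ins_at_lt nth_ins_at_gt)
      moreover have "ins_at i a rest ! i = a" using assms lr by (simp add: nth_ins_at_eq)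
      ultimately show ?thesis by simp
    qed
    finally show "T (ins_at i a rest) * (\<Prod>k<K. vs k (ins_at i a rest ! k)) = T (ins_at i a rest) * vs i a * (\<Prod>k<K - 1. vs (if k < i then k else Suc k) (rest ! k))"
      by (simp add: mult.assoc)
  qed
  also have "\<dots> = (\<Sum>rest\<in>LL (K - 1). (\<Prod>k<K - 1. vs (if k < i then k else Suc k) (rest ! k)) * (\<Sum>a\<in>UNIV. T (ins_at i a rest) * vs i a))"
    apply (subst sum.swap)
    apply (rule sum.cong[OF refl])
    apply (subst sum_distrib_left)
    apply (rule sum.cong[OF refl])
    by (simp add: ac_simps)
  also have "\<dots> = (\<Sum>rest\<in>LL (K - 1). (\<Prod>k<K - 1. vs (if k < i then k else Suc k) (rest ! k)) * cnj (flat_adj_mul K i T (vconj (vs i)) rest))"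
    by (simp add: flat_adj_mul_def vconj_def cnj_sum)
  finally show ?thesis .
qed

definition rnorm :: "nat \<Rightarrow> ('n::finite list \<Rightarrow> complex) \<Rightarrow> real" where
  "rnorm m v = sqrt (\<Sum>r\<in>LL m. (cmod (v r))\<^sup>2)"

lemma mlf_bound:
  assumes "i < K" "\<And>k. k < K \<Longrightarrow> k \<noteq> i \<Longrightarrow> vnorm2 (vs k) \<le> 1"
  shows "cmod (mlf K T vs) \<le> rnorm (K - 1) (flat_adj_mul K i T (vconj (vs i)))"
proof -
  define vs' where "vs' = (\<lambda>k. vs (if k < i then k else Suc k))"
  define r where "r = (\<lambda>rest. \<Prod>k<K - 1. vs' k (rest ! k))"
  define q where "q = flat_adj_mul K i T (vconj (vs i))"
  have "mlf K T vs = (\<Sum>rest\<in>LL (K - 1). r rest * cnj (q rest))"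
    unfolding r_def q_def vs'_def by (rule mlf_as_adj[OF assms(1)])
  then have "cmod (mlf K T vs) \<le> (\<Sum>rest\<in>LL (K - 1). cmod (r rest) * cmod (q rest))"
    by (simp add: norm_mult) (rule order_trans[OF norm_sum], simp add: norm_mult)
  also have "\<dots> = (\<Sum>rest\<in>LL (K - 1). \<bar>cmod (r rest)\<bar> * \<bar>cmod (q rest)\<bar>)" by simp
  also have "\<dots> \<le> L2_set (\<lambda>rest. cmod (r rest)) (LL (K - 1)) * L2_set (\<lambda>rest. cmod (q rest)) (LL (K - 1))"
    by (rule L2_set_mult_ineq)
  also have "L2_set (\<lambda>rest. cmod (q rest)) (LL (K - 1)) = rnorm (K - 1) q"
    by (simp add: L2_set_def rnorm_def)
  also have "L2_set (\<lambda>rest. cmod (r rest)) (LL (K - 1)) \<le> 1"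
  proof -
    have "(\<Sum>rest\<in>LL (K - 1). (cmod (r rest))\<^sup>2) = (\<Sum>rest\<in>LL (K - 1). \<Prod>k<K - 1. (cmod (vs' k (rest ! k)))\<^sup>2)"
      unfolding r_def by (intro sum.cong refl) (simp add: prod_norm[symmetric] prod_power_distrib)
    also have "\<dots> = (\<Prod>k<K - 1. \<Sum>a\<in>UNIV. (cmod (vs' k a))\<^sup>2)"
      by (rule sum_LL_prod)
    also have "\<dots> = (\<Prod>k<K - 1. (vnorm2 (vs' k))\<^sup>2)" by (simp add: vnorm2_sq)
    also have "\<dots> \<le> 1"
    proof (rule prod_le_1)
      fix k assume "k \<in> {..<K - 1}"
      then have "vnorm2 (vs' k) \<le> 1" unfolding vs'_def using assms by auto
      then show "0 \<le> (vnorm2 (vs' k))\<^sup>2 \<and> (vnorm2 (vs' k))\<^sup>2 \<le> 1"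
        using vnorm2_nonneg[of "vs' k"] by (simp add: power_le_one)
    qed
    finally show ?thesis by (simp add: L2_set_def)
  qed
  then have "L2_set (\<lambda>rest. cmod (r rest)) (LL (K - 1)) * rnorm (K - 1) q \<le> rnorm (K - 1) q"
    by (intro mult_left_le_one_le) (auto simp: rnorm_def intro: sum_nonneg L2_set_nonneg)
  finally show ?thesis by (simp add: q_def)
qed

definition phi :: "nat \<Rightarrow> ('n \<Rightarrow> complex) \<Rightarrow> nat \<Rightarrow> 'n \<Rightarrow> complex" where
  "phi j x = (\<lambda>k. if k < j then vconj x else x)"

lemma polyf_mlf:
  "polyf d T0 T x = T0 + (\<Sum>j=1..d. mlf (2*j) (T j) (phi j x))"
proof -
  have "(\<Prod>k<j. cnj (x (xs ! k))) * (\<Prod>k\<in>{j..<2*j}. x (xs ! k)) = (\<Prod>k<2*j. phi j x k (xs ! k))" for j xs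
  proof -
    have "{..<2*j} = {..<j} \<union> {j..<2*j}" by auto
    then have "(\<Prod>k<2*j. phi j x k (xs ! k)) = (\<Prod>k<j. phi j x k (xs ! k)) * (\<Prod>k\<in>{j..<2*j}. phi j x k (xs ! k))"
      by (simp add: prod.union_disjoint ivl_disj_int)
    also have "\<dots> = (\<Prod>k<j. cnj (x (xs ! k))) * (\<Prod>k\<in>{j..<2*j}. x (xs ! k))"
      by (intro arg_cong2[where f = "(*)"] prod.cong) (auto simp: phi_def vconj_def)
    finally show ?thesis by simp
  qed
  then show ?thesis unfolding polyf_def mlf_def by (simp add: mult.assoc)
qed




lemma vnorm2_vec: "norm (x :: complex ^ 'n::finite) = vnorm2 (\<lambda>k. x $ k)"
  by (simp add: norm_vec_def L2_set_def vnorm2_def)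

lemma vec_nth_lambda_eq[simp]: "(($) (vec_lambda z)) = z" by (rule ext) simp

lemma var_ext:
  fixes X :: "('n::finite \<Rightarrow> complex) set" and g :: "('n \<Rightarrow> complex) \<Rightarrow> real"
  assumes X0: "0 \<in> X" and Xadd: "\<And>u w. u \<in> X \<Longrightarrow> w \<in> X \<Longrightarrow> u + w \<in> X"
    and Xsc: "\<And>c u. u \<in> X \<Longrightarrow> cscale c u \<in> X" and Xne: "u0 \<in> X" "u0 \<noteq> 0"
    and ghom: "\<And>c u. g (cscale c u) = (cmod c)\<^sup>2 * g u"
    and gcont: "continuous_on UNIV (\<lambda>x::complex^'n. g (\<lambda>k. x $ k))"
  shows "\<exists>z0\<in>X. vnorm2 z0 = 1 \<and> (\<forall>z\<in>X. g z \<le> g z0 * (vnorm2 z)\<^sup>2)"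
    and "\<exists>z0\<in>X. vnorm2 z0 = 1 \<and> (\<forall>z\<in>X. g z0 * (vnorm2 z)\<^sup>2 \<le> g z)"
proof -
  define X' where "X' = {x::complex^'n. (\<lambda>k. x $ k) \<in> X}"
  have "(($) (0::complex^'n)) = (\<lambda>k. 0)" by (rule ext) simp
  then have h0: "(0::complex^'n) \<in> X'" using X0 by (simp add: X'_def zero_fun_def)
  have hadd: "x + y \<in> X'" if "x \<in> X'" "y \<in> X'" for x y
  proof -
    have "(\<lambda>k. x $ k) + (\<lambda>k. y $ k) \<in> X" using that Xadd by (simp add: X'_def)
    moreover have "(($) (x + y)) = (\<lambda>k. x $ k + y $ k)" by (rule ext) simp
    ultimately show ?thesis by (simp add: plus_fun_def X'_def)
  qed
  have hsc: "c *\<^sub>R x \<in> X'" if "x \<in> X'" for x c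
  proof -
    have "cscale (complex_of_real c) (\<lambda>k. x $ k) \<in> X" using that Xsc by (simp add: X'_def)
    moreover have "(($) (c *\<^sub>R x)) = (\<lambda>k. complex_of_real c * x $ k)" by (rule ext, subst vector_scaleR_component, rule scaleR_conv_of_real)
    ultimately show ?thesis by (simp add: cscale_def X'_def)
  qed
  have sub: "subspace X'" unfolding subspace_def using h0 hadd hsc by blast
  define KS where "KS = sphere 0 1 \<inter> X'"
  have cKS: "compact KS" unfolding KS_def
    using closed_subspace[OF sub] compact_sphere by (simp add: Int_commute closed_Int_compact)
  have gn: "g z \<le> M * (vnorm2 z)\<^sup>2" if "z \<in> X" "\<forall>y\<in>KS. g (\<lambda>k. y $ k) \<le> M" for z M
  proof (cases "z = 0")
    case True
    then show ?thesis using ghom[of 0 z] by (simp add: vnorm2_def)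
  next
    case False
    define nz where "nz = vnorm2 z"
    have nzpos: "nz > 0" using False vnorm2_zero_iff vnorm2_nonneg unfolding nz_def by (metis less_eq_real_def)
    define z' where "z' = cscale (complex_of_real (1 / nz)) z"
    have "vnorm2 z' = 1" using nzpos by (simp add: z'_def vnorm2_scale nz_def norm_divide)
    moreover have "z' \<in> X" using that(1) by (simp add: z'_def Xsc)
    ultimately have "(\<chi> k. z' k) \<in> KS" by (simp add: KS_def X'_def vnorm2_vec dist_0_norm)
    then have "g z' \<le> M" using that(2) by fastforce
    then have "(1 / nz)\<^sup>2 * g z \<le> M" using nzpos by (simp add: z'_def ghom norm_divide)
    then have "g z \<le> M * nz\<^sup>2" using nzpos by (simp add: field_simps power2_eq_square)
    then show ?thesis by (simp add: nz_def)
  qed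
  have gn2: "M * (vnorm2 z)\<^sup>2 \<le> g z" if "z \<in> X" "\<forall>y\<in>KS. M \<le> g (\<lambda>k. y $ k)" for z M
  proof (cases "z = 0")
    case True
    then show ?thesis using ghom[of 0 z] by (simp add: vnorm2_def)
  next
    case False
    define nz where "nz = vnorm2 z"
    have nzpos: "nz > 0" using False vnorm2_zero_iff vnorm2_nonneg unfolding nz_def by (metis less_eq_real_def)
    define z' where "z' = cscale (complex_of_real (1 / nz)) z"
    have "vnorm2 z' = 1" using nzpos by (simp add: z'_def vnorm2_scale nz_def norm_divide)
    moreover have "z' \<in> X" using that(1) by (simp add: z'_def Xsc)
    ultimately have "(\<chi> k. z' k) \<in> KS" by (simp add: KS_def X'_def vnorm2_vec dist_0_norm)
    then have "M \<le> g z'" using that(2) by fastforce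
    then have "M \<le> (1 / nz)\<^sup>2 * g z" using nzpos by (simp add: z'_def ghom norm_divide)
    then have "M * nz\<^sup>2 \<le> g z" using nzpos by (simp add: field_simps power2_eq_square)
    then show ?thesis by (simp add: nz_def)
  qed
  have KSne: "KS \<noteq> {}"
  proof -
    define n0 where "n0 = vnorm2 u0"
    have n0pos: "n0 > 0" using Xne vnorm2_zero_iff vnorm2_nonneg unfolding n0_def by (metis less_eq_real_def)
    define z' where "z' = cscale (complex_of_real (1 / n0)) u0"
    have "vnorm2 z' = 1" using n0pos by (simp add: z'_def vnorm2_scale n0_def norm_divide)
    moreover have "z' \<in> X" using Xne by (simp add: z'_def Xsc)
    ultimately have "(\<chi> k. z' k) \<in> KS" by (simp add: KS_def X'_def vnorm2_vec dist_0_norm)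
    then show ?thesis by blast
  qed
  have gc: "continuous_on KS (\<lambda>x::complex^'n. g (\<lambda>k. x $ k))"
    using gcont continuous_on_subset by blast
  have mem: "(\<lambda>k. x $ k) \<in> X \<and> vnorm2 (\<lambda>k. x $ k) = 1" if "x \<in> KS" for x
    using that by (simp add: KS_def X'_def vnorm2_vec dist_0_norm)
  obtain x0 where x0: "x0 \<in> KS" "\<forall>y\<in>KS. g (\<lambda>k. y $ k) \<le> g (\<lambda>k. x0 $ k)"
    using continuous_attains_sup[OF cKS KSne gc] by blast
  show "\<exists>z0\<in>X. vnorm2 z0 = 1 \<and> (\<forall>z\<in>X. g z \<le> g z0 * (vnorm2 z)\<^sup>2)"
    using mem[OF x0(1)] gn x0(2) by blast
  obtain x1 where x1: "x1 \<in> KS" "\<forall>y\<in>KS. g (\<lambda>k. x1 $ k) \<le> g (\<lambda>k. y $ k)"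
    using continuous_attains_inf[OF cKS KSne gc] by blast
  show "\<exists>z0\<in>X. vnorm2 z0 = 1 \<and> (\<forall>z\<in>X. g z0 * (vnorm2 z)\<^sup>2 \<le> g z)"
    using mem[OF x1(1)] gn2 x1(2) by blast
qed




definition gfun :: "nat \<Rightarrow> nat \<Rightarrow> ('n::finite list \<Rightarrow> complex) \<Rightarrow> ('n \<Rightarrow> complex) \<Rightarrow> real" where
  "gfun K i T u = (\<Sum>r\<in>LL (K - 1). (cmod (flat_adj_mul K i T u r))\<^sup>2)"

definition Aop :: "nat \<Rightarrow> nat \<Rightarrow> ('n::finite list \<Rightarrow> complex) \<Rightarrow> ('n \<Rightarrow> complex) \<Rightarrow> ('n \<Rightarrow> complex)" where
  "Aop K i T u = flat_mul K i T (flat_adj_mul K i T u)"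

lemma Mh_add: "flat_adj_mul K i T (u + w) = (\<lambda>r. flat_adj_mul K i T u r + flat_adj_mul K i T w r)"
  by (simp add: flat_adj_mul_def fun_eq_iff sum.distrib algebra_simps)

lemma Mh_scale: "flat_adj_mul K i T (cscale c u) = (\<lambda>r. c * flat_adj_mul K i T u r)"
  by (simp add: flat_adj_mul_def fun_eq_iff sum_distrib_left cscale_apply algebra_simps)

lemma M_add: "flat_mul K i T (\<lambda>r. p r + q r) = flat_mul K i T p + flat_mul K i T q"
  by (simp add: flat_mul_def fun_eq_iff sum.distrib algebra_simps)

lemma M_scale: "flat_mul K i T (\<lambda>r. c * p r) = cscale c (flat_mul K i T p)"
  by (simp add: flat_mul_def fun_eq_iff sum_distrib_left cscale_apply algebra_simps)

lemma M_cong: "(\<And>r. length r = K - 1 \<Longrightarrow> p r = q r) \<Longrightarrow> flat_mul K i T p = flat_mul K i T q"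
  by (simp add: flat_mul_def fun_eq_iff)

lemma Aop_add: "Aop K i T (u + w) = Aop K i T u + Aop K i T w"
  by (simp add: Aop_def Mh_add M_add)

lemma Aop_scale: "Aop K i T (cscale c u) = cscale c (Aop K i T u)"
  by (simp add: Aop_def Mh_scale M_scale)

lemma adjoint: "hinner w (flat_mul K i T q) = (\<Sum>r\<in>LL (K - 1). cnj (flat_adj_mul K i T w r) * q r)"
proof -
  have "hinner w (flat_mul K i T q) = (\<Sum>a\<in>UNIV. \<Sum>r\<in>LL (K - 1). cnj (w a) * T (ins_at i a r) * q r)"
    by (simp add: hinner_def flat_mul_def sum_distrib_left mult.assoc)
  also have "\<dots> = (\<Sum>r\<in>LL (K - 1). \<Sum>a\<in>UNIV. cnj (w a) * T (ins_at i a r) * q r)"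
    by (rule sum.swap)
  also have "\<dots> = (\<Sum>r\<in>LL (K - 1). cnj (flat_adj_mul K i T w r) * q r)"
    by (simp add: flat_adj_mul_def cnj_sum sum_distrib_left sum_distrib_right ac_simps)
  finally show ?thesis .
qed

lemma A_hinner: "hinner w (Aop K i T u) = (\<Sum>r\<in>LL (K - 1). cnj (flat_adj_mul K i T w r) * flat_adj_mul K i T u r)"
  by (simp add: Aop_def adjoint)

lemma A_sym: "hinner w (Aop K i T u) = cnj (hinner u (Aop K i T w))"
  by (simp add: A_hinner cnj_sum mult.commute)

lemma A_self: "hinner u (Aop K i T u) = complex_of_real (gfun K i T u)"
  by (simp add: A_hinner gfun_def cnj_mult_self)

lemma gfun_nonneg: "gfun K i T u \<ge> 0"
  by (simp add: gfun_def sum_nonneg)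

lemma gfun_hom: "gfun K i T (cscale c u) = (cmod c)\<^sup>2 * gfun K i T u"
  by (simp add: gfun_def Mh_scale norm_mult power_mult_distrib sum_distrib_left)

lemma gfun_zero: "gfun K i T 0 = 0"
  using gfun_hom[of K i T 0 0] by (simp add: cscale_def zero_fun_def)

lemma gfun_cont: "continuous_on UNIV (\<lambda>x::complex^'n::finite. gfun K i T (($) x))"
  unfolding gfun_def flat_adj_mul_def by (intro continuous_intros)

lemma sing_eig:
  assumes "s \<in> left_sing_vecs_ge K i T \<delta>"
  shows "\<exists>\<sigma>. \<sigma> \<ge> \<delta> \<and> Aop K i T s = cscale (complex_of_real (\<sigma>\<^sup>2)) s"
proof -
  obtain \<sigma> v where sv: "\<sigma> \<ge> \<delta>" "flat_mul K i T v = (\<lambda>a. complex_of_real \<sigma> * s a)"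
    "\<forall>rest. length rest = K - 1 \<longrightarrow> flat_adj_mul K i T s rest = complex_of_real \<sigma> * v rest"
    using assms unfolding left_sing_vecs_ge_def by blast
  have "Aop K i T s = flat_mul K i T (\<lambda>r. complex_of_real \<sigma> * v r)"
    unfolding Aop_def using sv(3) by (intro M_cong) auto
  also have "\<dots> = cscale (complex_of_real (\<sigma>\<^sup>2)) s"
    by (simp add: M_scale sv(2) cscale_def power2_eq_square mult.assoc)
  finally show ?thesis using sv(1) by blast
qed

lemma gexp:
  assumes "hinner z0 h = 0"
  shows "gfun K i T (z0 + cscale (complex_of_real t) h) =
     gfun K i T z0 + 2 * t * Re (hinner h (Aop K i T z0)) + t\<^sup>2 * gfun K i T h"
proof -
  let ?A = "Aop K i T"
  define c where "c = hinner h (?A z0)"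
  have "complex_of_real (gfun K i T (z0 + cscale (complex_of_real t) h))
     = hinner (z0 + cscale (complex_of_real t) h) (?A (z0 + cscale (complex_of_real t) h))"
    by (simp add: A_self)
  also have "\<dots> = hinner z0 (?A z0) + complex_of_real t * (hinner z0 (?A h) + hinner h (?A z0))
      + complex_of_real t * complex_of_real t * hinner h (?A h)"
    by (simp add: Aop_add Aop_scale hinner_add_left hinner_add_right hinner_scale_left hinner_scale_right algebra_simps)
  also have "hinner z0 (?A h) + hinner h (?A z0) = cnj c + c"
    by (simp add: c_def A_sym[of z0])
  also have "cnj c + c = complex_of_real (2 * Re c)"
    using complex_add_cnj[of c] by (simp add: add.commute)
  also have "hinner z0 (?A z0) + complex_of_real t * complex_of_real (2 * Re c)
      + complex_of_real t * complex_of_real t * hinner h (?A h)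
      = complex_of_real (gfun K i T z0 + 2 * t * Re c + t\<^sup>2 * gfun K i T h)"
    by (simp add: A_self power2_eq_square algebra_simps)
  finally show ?thesis using of_real_eq_iff c_def by blast
qed

lemma eig_from_ext:
  fixes X :: "('n::finite \<Rightarrow> complex) set"
  assumes Xadd: "\<And>u w. u \<in> X \<Longrightarrow> w \<in> X \<Longrightarrow> u + w \<in> X"
    and Xsc: "\<And>c u. u \<in> X \<Longrightarrow> cscale c u \<in> X"
    and z0: "z0 \<in> X" "vnorm2 z0 = 1" and Az0: "Aop K i T z0 \<in> X"
    and ext: "(\<forall>z\<in>X. gfun K i T z \<le> gfun K i T z0 * (vnorm2 z)\<^sup>2) \<or>
              (\<forall>z\<in>X. gfun K i T z0 * (vnorm2 z)\<^sup>2 \<le> gfun K i T z)"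
  shows "Aop K i T z0 = cscale (complex_of_real (gfun K i T z0)) z0"
proof -
  let ?A = "Aop K i T" and ?g = "gfun K i T"
  define m where "m = ?g z0"
  define h where "h = ?A z0 + cscale (complex_of_real (- m)) z0"
  have hX: "h \<in> X" unfolding h_def using Az0 z0(1) by (intro Xadd Xsc)
  have z0z0: "hinner z0 z0 = 1" using z0(2) by (simp add: hinner_self)
  have z0h: "hinner z0 h = 0"
    unfolding h_def by (simp only: hinner_add_right hinner_scale_right z0z0 A_self m_def) simp
  have hz0: "hinner h z0 = 0" using z0h by (subst hinner_commute) simp
  define H where "H = (vnorm2 h)\<^sup>2"
  have hh: "hinner h h = complex_of_real H" by (simp add: H_def hinner_self)
  have hA: "hinner h (?A z0) = complex_of_real H"
  proof -
    have "?A z0 = h + cscale (complex_of_real m) z0"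
      by (simp add: h_def fun_eq_iff cscale_apply)
    then show ?thesis by (simp add: hinner_add_right hinner_scale_right hz0 hh)
  qed
  define G where "G = ?g h"
  have G0: "G \<ge> 0" by (simp add: G_def gfun_nonneg)
  have m0: "m \<ge> 0" by (simp add: m_def gfun_nonneg)
  have H0: "H \<ge> 0" by (simp add: H_def)
  have gt: "?g (z0 + cscale (complex_of_real t) h) = m + 2 * t * H + t\<^sup>2 * G" for t
    using gexp[OF z0h, of K i T t] hA by (simp add: m_def G_def)
  have nt: "(vnorm2 (z0 + cscale (complex_of_real t) h))\<^sup>2 = 1 + t\<^sup>2 * H" for t
  proof -
    have "hinner z0 (cscale (complex_of_real t) h) = 0" by (simp add: hinner_scale_right z0h)
    from pythag[OF this] show ?thesis using z0(2) by (simp add: vnorm2_scale power_mult_distrib H_def)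
  qed
  have zt: "z0 + cscale (complex_of_real t) h \<in> X" for t using z0(1) hX by (intro Xadd Xsc)
  have "H = 0"
  proof (rule ccontr)
    assume "H \<noteq> 0"
    then have Hp: "H > 0" using H0 by simp
    from ext show False
    proof
      assume a: "\<forall>z\<in>X. ?g z \<le> ?g z0 * (vnorm2 z)\<^sup>2"
      define t where "t = 1 / (m + 1)"
      have tp: "t > 0" using m0 by (simp add: t_def)
      have "?g (z0 + cscale (complex_of_real t) h) \<le> ?g z0 * (vnorm2 (z0 + cscale (complex_of_real t) h))\<^sup>2"
        using a zt[of t] by blast
      then have "m + 2 * t * H + t\<^sup>2 * G \<le> m * (1 + t\<^sup>2 * H)"
        unfolding gt nt m_def .
      then have "2 * t * H \<le> t\<^sup>2 * (m * H) - t\<^sup>2 * G" by (simp add: algebra_simps)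
      also have "\<dots> \<le> t\<^sup>2 * (m * H)" using G0 by simp
      finally have "2 * t * H \<le> t * (t * m) * H" by (simp add: power2_eq_square mult.assoc)
      then have "2 * H \<le> (t * m) * H" using tp by (simp add: mult.assoc)
      moreover have "t * m < 1" using m0 by (simp add: t_def)
      ultimately show False using Hp by (smt (verit, best) mult_less_cancel_right2)
    next
      assume a: "\<forall>z\<in>X. ?g z0 * (vnorm2 z)\<^sup>2 \<le> ?g z"
      define s where "s = H / (G + 1)"
      have sp: "s > 0" using Hp G0 by (simp add: s_def)
      have "?g z0 * (vnorm2 (z0 + cscale (complex_of_real (-s)) h))\<^sup>2 \<le> ?g (z0 + cscale (complex_of_real (-s)) h)"
        using a zt[of "-s"] by blast
      then have "m * (1 + (-s)\<^sup>2 * H) \<le> m + 2 * (-s) * H + (-s)\<^sup>2 * G"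
        unfolding gt nt m_def .
      then have "2 * s * H \<le> s\<^sup>2 * G - s\<^sup>2 * (m * H)" by (simp add: algebra_simps)
      also have "\<dots> \<le> s\<^sup>2 * G" using m0 H0 by simp
      finally have "2 * H \<le> s * G" using sp by (simp add: power2_eq_square mult.assoc)
      also have "s * G = H * (G / (G + 1))" by (simp add: s_def)
      also have "\<dots> < H * 1" using Hp G0 by (intro mult_strict_left_mono) auto
      finally show False using Hp by simp
    qed
  qed
  then have "h = 0" using hinner_self_eq_0[of h] hh by simp
  then show ?thesis unfolding m_def h_def by (simp add: fun_eq_iff cscale_apply)
qed




lemma A_on_sing:
  assumes "s \<in> left_sing_vecs_ge K i T \<delta>"
  obtains \<sigma> where "\<sigma> \<ge> \<delta>" "\<And>u. hinner s (Aop K i T u) = complex_of_real (\<sigma>\<^sup>2) * hinner s u"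
proof -
  obtain \<sigma> where s: "\<sigma> \<ge> \<delta>" "Aop K i T s = cscale (complex_of_real (\<sigma>\<^sup>2)) s"
    using sing_eig[OF assms] by blast
  have "hinner s (Aop K i T u) = complex_of_real (\<sigma>\<^sup>2) * hinner s u" for u
  proof -
    have "hinner s (Aop K i T u) = cnj (hinner u (Aop K i T s))" by (rule A_sym)
    also have "\<dots> = complex_of_real (\<sigma>\<^sup>2) * cnj (hinner u s)" by (simp add: s(2) hinner_scale_right)
    also have "cnj (hinner u s) = hinner s u" by (subst hinner_commute) simp
    finally show ?thesis .
  qed
  then show ?thesis using that s(1) by blast
qed

lemma adj_small:
  fixes T :: "'n::finite list \<Rightarrow> complex"
  assumes dpos: "\<delta> > 0" and u: "\<forall>s\<in>left_sing_vecs_ge K i T \<delta>. hinner s u = 0"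
  shows "gfun K i T u \<le> \<delta>\<^sup>2 * (vnorm2 u)\<^sup>2"
proof -
  let ?S = "left_sing_vecs_ge K i T \<delta>" and ?A = "Aop K i T" and ?g = "gfun K i T"
  define X where "X = {u. \<forall>s\<in>?S. hinner s u = 0}"
  have Xadd: "u + w \<in> X" if "u \<in> X" "w \<in> X" for u w using that by (simp add: X_def hinner_add_right)
  have Xsc: "cscale c u \<in> X" if "u \<in> X" for c u using that by (simp add: X_def hinner_scale_right)
  have X0: "0 \<in> X" by (simp add: X_def)
  have uX: "u \<in> X" using u by (simp add: X_def)
  show ?thesis
  proof (cases "\<exists>u0\<in>X. u0 \<noteq> 0")
    case False
    then have "u = 0" using uX by blast
    then show ?thesis by (simp add: gfun_zero)
  next
    case True
    then obtain u0 where u0: "u0 \<in> X" "u0 \<noteq> 0" by blast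
    obtain z0 where z0: "z0 \<in> X" "vnorm2 z0 = 1" "\<forall>z\<in>X. ?g z \<le> ?g z0 * (vnorm2 z)\<^sup>2"
      using var_ext(1)[OF X0 Xadd Xsc u0 gfun_hom gfun_cont] by blast
    have Az0: "?A z0 \<in> X"
    proof -
      have "hinner s (?A z0) = 0" if ss: "s \<in> ?S" for s
      proof -
        obtain \<sigma> where "\<And>u. hinner s (?A u) = complex_of_real (\<sigma>\<^sup>2) * hinner s u"
          using A_on_sing[OF ss] by metis
        then show ?thesis using z0(1) ss by (simp add: X_def)
      qed
      then show ?thesis by (simp add: X_def)
    qed
    have eig: "?A z0 = cscale (complex_of_real (?g z0)) z0"
      using eig_from_ext[OF Xadd Xsc z0(1,2) Az0] z0(3) by blast
    have "?g z0 < \<delta>\<^sup>2"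
    proof (rule ccontr)
      assume "\<not> ?g z0 < \<delta>\<^sup>2"
      then have mge: "?g z0 \<ge> \<delta>\<^sup>2" by simp
      define \<sigma> where "\<sigma> = sqrt (?g z0)"
      have \<sigma>ge: "\<sigma> \<ge> \<delta>" using mge dpos by (simp add: \<sigma>_def real_le_rsqrt)
      then have \<sigma>pos: "\<sigma> > 0" using dpos by simp
      have \<sigma>sq: "\<sigma>\<^sup>2 = ?g z0" by (simp add: \<sigma>_def gfun_nonneg)
      define v where "v = (\<lambda>r. flat_adj_mul K i T z0 r / complex_of_real \<sigma>)"
      have "flat_mul K i T v = cscale (1 / complex_of_real \<sigma>) (?A z0)"
        unfolding Aop_def v_def using M_scale[of K i T "1 / complex_of_real \<sigma>" "flat_adj_mul K i T z0"]
        by (simp add: field_simps)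
      also have "\<dots> = (\<lambda>a. complex_of_real \<sigma> * z0 a)"
        using \<sigma>pos by (simp add: eig fun_eq_iff cscale_apply \<sigma>sq[symmetric] power2_eq_square)
      finally have Mv: "flat_mul K i T v = (\<lambda>a. complex_of_real \<sigma> * z0 a)" .
      have Mhz: "flat_adj_mul K i T z0 rest = complex_of_real \<sigma> * v rest" for rest
        using \<sigma>pos by (simp add: v_def)
      have z0ne: "z0 \<noteq> 0" using z0(2) vnorm2_zero_iff by force
      have "z0 \<in> ?S" unfolding left_sing_vecs_ge_def using z0ne \<sigma>ge Mv Mhz by blast
      then have "hinner z0 z0 = 0" using z0(1) by (simp add: X_def)
      then show False using z0ne hinner_self_eq_0 by blast
    qed
    then have "?g u \<le> ?g z0 * (vnorm2 u)\<^sup>2" using z0(3) uX by blast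
    also have "\<dots> \<le> \<delta>\<^sup>2 * (vnorm2 u)\<^sup>2" using \<open>?g z0 < \<delta>\<^sup>2\<close> by (intro mult_right_mono) auto
    finally show ?thesis .
  qed
qed

lemma adj_big:
  fixes T :: "'n::finite list \<Rightarrow> complex"
  assumes dpos: "\<delta> > 0" and u: "u \<in> cv.span (left_sing_vecs_ge K i T \<delta>)"
  shows "\<delta>\<^sup>2 * (vnorm2 u)\<^sup>2 \<le> gfun K i T u"
proof -
  let ?S = "left_sing_vecs_ge K i T \<delta>" and ?A = "Aop K i T" and ?g = "gfun K i T"
  define X where "X = cv.span ?S"
  have Xadd: "u + w \<in> X" if "u \<in> X" "w \<in> X" for u w using that by (simp add: X_def cv.span_add)
  have Xsc: "cscale c u \<in> X" if "u \<in> X" for c u using that by (simp add: X_def cv.span_scale)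
  have X0: "0 \<in> X" by (simp add: X_def cv.span_zero)
  have uX: "u \<in> X" using u by (simp add: X_def)
  show ?thesis
  proof (cases "u = 0")
    case True
    then show ?thesis by (simp add: gfun_zero vnorm2_def)
  next
    case False
    obtain z0 where z0: "z0 \<in> X" "vnorm2 z0 = 1" "\<forall>z\<in>X. ?g z0 * (vnorm2 z)\<^sup>2 \<le> ?g z"
      using var_ext(2)[OF X0 Xadd Xsc uX False gfun_hom gfun_cont] by blast
    have AX: "cv.span ?S \<subseteq> {u. ?A u \<in> cv.span ?S}"
    proof (rule cv.span_minimal)
      show "?S \<subseteq> {u. ?A u \<in> cv.span ?S}"
      proof
        fix s assume "s \<in> ?S"
        then obtain \<sigma> where "?A s = cscale (complex_of_real (\<sigma>\<^sup>2)) s" using sing_eig by blast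
        then show "s \<in> {u. ?A u \<in> cv.span ?S}" using \<open>s \<in> ?S\<close> by (simp add: cv.span_scale cv.span_base)
      qed
      show "cv.subspace {u. ?A u \<in> cv.span ?S}"
        unfolding cv.subspace_def
      proof (intro conjI allI ballI; simp)
        have "?A 0 = 0" by (rule ext) (simp add: Aop_def flat_mul_def flat_adj_mul_def)
        then show "?A 0 \<in> cv.span ?S" by (simp add: cv.span_zero)
      next
        fix x y assume "?A x \<in> cv.span ?S" "?A y \<in> cv.span ?S"
        then show "?A (x + y) \<in> cv.span ?S" by (simp add: Aop_add cv.span_add)
      next
        fix c x assume "?A x \<in> cv.span ?S"
        then show "?A (cscale c x) \<in> cv.span ?S" by (simp add: Aop_scale cv.span_scale)
      qed
    qed
    have Az0: "?A z0 \<in> X" using AX z0(1) by (auto simp: X_def)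
    have eig: "?A z0 = cscale (complex_of_real (?g z0)) z0"
      using eig_from_ext[OF Xadd Xsc z0(1,2) Az0] z0(3) by blast
    have "?g z0 \<ge> \<delta>\<^sup>2"
    proof (rule ccontr)
      assume "\<not> ?g z0 \<ge> \<delta>\<^sup>2"
      then have mlt: "?g z0 < \<delta>\<^sup>2" by simp
      have "hinner s z0 = 0" if ss: "s \<in> ?S" for s
      proof -
        obtain \<sigma> where \<sigma>: "\<sigma> \<ge> \<delta>" "\<And>u. hinner s (?A u) = complex_of_real (\<sigma>\<^sup>2) * hinner s u"
          using A_on_sing[OF ss] by metis
        have "complex_of_real (\<sigma>\<^sup>2) * hinner s z0 = complex_of_real (?g z0) * hinner s z0"
          using \<sigma>(2)[of z0] unfolding eig hinner_scale_right by (rule sym)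
        moreover have "\<sigma>\<^sup>2 \<noteq> ?g z0"
        proof -
          have "\<delta>\<^sup>2 \<le> \<sigma>\<^sup>2" using \<sigma>(1) dpos by (simp add: power_mono)
          then show ?thesis using mlt by simp
        qed
        ultimately show ?thesis by (metis mult_cancel_right of_real_eq_iff)
      qed
      then have "hinner z0 z0 = 0" using orth_span z0(1) unfolding X_def by blast
      then have "z0 = 0" using hinner_self_eq_0 by blast
      then show False using z0(2) by (simp add: vnorm2_def)
    qed
    then have "\<delta>\<^sup>2 * (vnorm2 u)\<^sup>2 \<le> ?g z0 * (vnorm2 u)\<^sup>2" by (intro mult_right_mono) auto
    also have "\<dots> \<le> ?g u" using z0(3) uX by blast
    finally show ?thesis .
  qed
qed

lemma frob_sq: "(frob K T)\<^sup>2 = (\<Sum>xs\<in>LL K. (cmod (T xs))\<^sup>2)"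
  unfolding frob_def by (rule real_sqrt_pow2) (simp add: sum_nonneg)

lemma card_bound:
  fixes T :: "'n::finite list \<Rightarrow> complex"
  assumes iK: "i < K" and dpos: "\<delta> > 0" and E: "finite E" "orthon E" "E \<subseteq> cv.span (left_sing_vecs_ge K i T \<delta>)"
  shows "real (card E) * \<delta>\<^sup>2 \<le> (frob K T)\<^sup>2"
proof -
  let ?S = "left_sing_vecs_ge K i T \<delta>" and ?g = "gfun K i T"
  define c where "c = (\<lambda>r a. T (ins_at i a r))"
  have unit: "vnorm2 e = 1" if "e \<in> E" for e
  proof -
    have "hinner e e = 1" using E(2) that by (simp add: orthon_def)
    then have "complex_of_real ((vnorm2 e)\<^sup>2) = 1" by (simp only: hinner_self)
    then have "(vnorm2 e)\<^sup>2 = 1" using of_real_eq_1_iff by blast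
    then show ?thesis using vnorm2_nonneg[of e] by (simp add: power2_eq_1_iff) 
  qed
  have "real (card E) * \<delta>\<^sup>2 = (\<Sum>e\<in>E. \<delta>\<^sup>2 * (vnorm2 e)\<^sup>2)" by (simp add: unit)
  also have "\<dots> \<le> (\<Sum>e\<in>E. ?g e)" by (intro sum_mono adj_big[OF dpos]) (use E(3) in auto)
  also have "\<dots> = (\<Sum>r\<in>LL (K - 1). \<Sum>e\<in>E. (cmod (hinner e (c r)))\<^sup>2)"
  proof -
    have "cmod (flat_adj_mul K i T e r) = cmod (hinner e (c r))" for e r
    proof -
      have "flat_adj_mul K i T e r = hinner (c r) e" by (simp add: flat_adj_mul_def hinner_def c_def)
      also have "\<dots> = cnj (hinner e (c r))" by (rule hinner_commute)
      finally show ?thesis by simp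
    qed
    then show ?thesis unfolding gfun_def by (subst sum.swap) simp
  qed
  also have "\<dots> \<le> (\<Sum>r\<in>LL (K - 1). (vnorm2 (c r))\<^sup>2)"
    by (intro sum_mono bessel E)
  also have "\<dots> = (\<Sum>r\<in>LL (K - 1). \<Sum>a\<in>UNIV. (cmod (T (ins_at i a r)))\<^sup>2)"
    by (simp add: vnorm2_sq c_def)
  also have "\<dots> = (\<Sum>xs\<in>LL K. (cmod (T xs))\<^sup>2)"
    using sum_ins[OF iK, of "\<lambda>xs. (cmod (T xs))\<^sup>2"] by (simp add: sum.swap[of _ UNIV])
  also have "\<dots> = (frob K T)\<^sup>2" by (simp add: frob_sq)
  finally show ?thesis .
qed

lemma dim_sub_bound:
  fixes T :: "'n::finite list \<Rightarrow> complex"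
  assumes iK: "i < K" and dpos: "\<delta> > 0"
  shows "cv.dim (cv.span (left_sing_vecs_ge K i T \<delta>)) \<le> nat \<lfloor>(frob K T)\<^sup>2 / \<delta>\<^sup>2\<rfloor>"
    and "cv.dim (vconj ` cv.span (left_sing_vecs_ge K i T \<delta>)) \<le> nat \<lfloor>(frob K T)\<^sup>2 / \<delta>\<^sup>2\<rfloor>"
proof -
  let ?V = "cv.span (left_sing_vecs_ge K i T \<delta>)"
  let ?N = "nat \<lfloor>(frob K T)\<^sup>2 / \<delta>\<^sup>2\<rfloor>"
  have cb: "card E \<le> ?N" if "finite E" "orthon E" "E \<subseteq> ?V" for E
  proof -
    have "real (card E) * \<delta>\<^sup>2 \<le> (frob K T)\<^sup>2" by (rule card_bound[OF iK dpos that])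
    then have "real (card E) \<le> (frob K T)\<^sup>2 / \<delta>\<^sup>2" using dpos by (simp add: field_simps)
    then show ?thesis by linarith
  qed
  show "cv.dim ?V \<le> ?N"
    by (rule dim_bound_orthon) (use cb in \<open>auto simp: cv.span_span\<close>)
  have sub: "cv.span (vconj ` ?V) = vconj ` ?V"
  proof (rule cv.span_subspace)
    show "vconj ` ?V \<subseteq> vconj ` ?V" by simp
    show "vconj ` ?V \<subseteq> cv.span (vconj ` ?V)" by (rule cv.span_superset)
    show "cv.subspace (vconj ` ?V)"
      unfolding cv.subspace_def
    proof (intro conjI ballI allI)
      have "vconj 0 = 0" by (simp add: vconj_def zero_fun_def)
      then show "0 \<in> vconj ` ?V" using cv.span_zero by (metis image_eqI)
    next
      fix x y assume "x \<in> vconj ` ?V" "y \<in> vconj ` ?V"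
      then obtain x' y' where "x' \<in> ?V" "y' \<in> ?V" "x = vconj x'" "y = vconj y'" by blast
      moreover have "vconj x' + vconj y' = vconj (x' + y')" by (simp add: vconj_def fun_eq_iff)
      ultimately show "x + y \<in> vconj ` ?V" using cv.span_add by (metis image_eqI)
    next
      fix c x assume "x \<in> vconj ` ?V"
      then obtain x' where "x' \<in> ?V" "x = vconj x'" by blast
      moreover have "cscale c (vconj x') = vconj (cscale (cnj c) x')" by (simp add: vconj_def fun_eq_iff cscale_apply)
      ultimately show "cscale c x \<in> vconj ` ?V" using cv.span_scale by (metis image_eqI)
    qed
  qed
  have inj: "inj vconj" by (metis injI vconj_vconj)
  show "cv.dim (vconj ` ?V) \<le> ?N"
  proof (rule dim_bound_orthon)
    fix E assume E: "finite E" "orthon E" "E \<subseteq> cv.span (vconj ` ?V)"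
    have "finite (vconj ` E)" using E(1) by simp
    moreover have "orthon (vconj ` E)"
      using E(2) unfolding orthon_def by (auto simp: hinner_vconj inj_eq[OF inj])
    moreover have "vconj ` E \<subseteq> ?V" using E(3) sub by auto
    ultimately have "card (vconj ` E) \<le> ?N" by (rule cb)
    then show "card E \<le> ?N" by (simp add: card_image inj_on_subset[OF inj])
  qed
qed




lemma dim_Un_le: "cv.dim (A \<union> B :: ('n::finite \<Rightarrow> complex) set) \<le> cv.dim A + cv.dim B"
proof -
  obtain BA where BA: "BA \<subseteq> A" "cv.independent BA" "A \<subseteq> cv.span BA" "card BA = cv.dim A"
    using cv.basis_exists by blast
  obtain BB where BB: "BB \<subseteq> B" "cv.independent BB" "B \<subseteq> cv.span BB" "card BB = cv.dim B"
    using cv.basis_exists by blast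
  have f: "finite BA" "finite BB" using BA(2) BB(2) indep_finite by auto
  have "A \<union> B \<subseteq> cv.span (BA \<union> BB)"
    using BA(3) BB(3) cv.span_mono[of BA "BA \<union> BB"] cv.span_mono[of BB "BA \<union> BB"] by auto
  then have "cv.dim (A \<union> B) \<le> card (BA \<union> BB)" using f by (intro cv.dim_le_card) auto
  also have "\<dots> \<le> card BA + card BB" by (rule card_Un_le)
  finally show ?thesis using BA(4) BB(4) by simp
qed

lemma dim_UN_le:
  assumes "finite P"
  shows "cv.dim (\<Union>p\<in>P. F p :: ('n::finite \<Rightarrow> complex) set) \<le> (\<Sum>p\<in>P. cv.dim (F p))"
  using assms
proof (induction P rule: finite_induct)
  case empty
  have "cv.dim ({} :: ('n \<Rightarrow> complex) set) = 0"
    using cv.dim_le_card[of "{}" "{}"] by simp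
  then show ?case by simp
next
  case (insert x P)
  have "cv.dim (\<Union>p\<in>insert x P. F p) = cv.dim (F x \<union> (\<Union>p\<in>P. F p))" by simp
  also have "\<dots> \<le> cv.dim (F x) + cv.dim (\<Union>p\<in>P. F p)" by (rule dim_Un_le)
  also have "\<dots> \<le> cv.dim (F x) + (\<Sum>p\<in>P. cv.dim (F p))" using insert.IH by simp
  finally show ?case using insert.hyps by simp
qed

lemma sum_2j: "(\<Sum>j=1..d. 2 * j) = d * (d + 1::nat)"
  by (induction d) auto

lemma vconj_diff: "vconj (x - y) = vconj x - vconj y"
  by (simp add: vconj_def fun_eq_iff)

theorem lemma6p4:
  fixes d :: nat and \<epsilon> :: real and T0 :: complex
    and T :: "nat \<Rightarrow> 'n::finite list \<Rightarrow> complex"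
  assumes "d \<ge> 1" and "\<epsilon> > 0"
    and "cmod T0 \<le> 1"
    and "\<And>j. j \<in> {1..d} \<Longrightarrow> frob (2*j) (T j) \<le> 1"
  defines "W \<equiv> cspan (\<Union>j\<in>{1..d}. \<Union>i\<in>{..<2*j}.
              Wsub (2*j) i (T j) (\<epsilon> / (d+1)^2) \<union> vconj ` Wsub (2*j) i (T j) (\<epsilon> / (d+1)^2))"
  shows "real (cdim W) \<le> 8 * (d+1)^6 / \<epsilon>^2
     \<and> (\<forall>y :: 'n \<Rightarrow> complex. vnorm2 y \<le> 1 \<longrightarrow> cmod (polyf d T0 T y - polyf d T0 T (orth_proj W y)) \<le> \<epsilon>)"
proof -
  define \<delta> where "\<delta> = \<epsilon> / (d+1)^2"
  have dpos: "\<delta> > 0" using assms(2) by (simp add: \<delta>_def)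
  define S where "S = (\<lambda>j i. left_sing_vecs_ge (2*j) i (T j) \<delta>)"
  define G where "G = (\<lambda>j i. cv.span (S j i))"
  define U where "U = (\<Union>j\<in>{1..d}. \<Union>i\<in>{..<2*j}. G j i \<union> vconj ` G j i)"
  have WU: "W = cv.span U"
    unfolding W_def U_def G_def S_def \<delta>_def Wsub_def cspan_eq ..
  define N where "N = nat \<lfloor>1 / \<delta>\<^sup>2\<rfloor>"
  have Nle: "real N \<le> 1 / \<delta>\<^sup>2" using dpos by (simp add: N_def)
  have dimG: "cv.dim (G j i) \<le> N \<and> cv.dim (vconj ` G j i) \<le> N" if "j \<in> {1..d}" "i < 2 * j" for j i
  proof -
    have fr: "(frob (2*j) (T j))\<^sup>2 \<le> 1"
      using assms(4)[OF that(1)] by (intro power_le_one) (auto simp: frob_def intro!: sum_nonneg)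
    have "nat \<lfloor>(frob (2*j) (T j))\<^sup>2 / \<delta>\<^sup>2\<rfloor> \<le> N"
      unfolding N_def using fr dpos by (intro nat_mono floor_mono divide_right_mono) auto
    then show ?thesis
      using dim_sub_bound[OF that(2) dpos, of "T j"] by (simp add: G_def S_def)
  qed
  have part1: "real (cdim W) \<le> 8 * (d+1)^6 / \<epsilon>^2"
  proof -
    have "cdim W = cv.dim U" by (simp add: WU cdim_eq)
    also have "\<dots> \<le> (\<Sum>j\<in>{1..d}. cv.dim (\<Union>i\<in>{..<2*j}. G j i \<union> vconj ` G j i))"
      unfolding U_def by (rule dim_UN_le) simp
    also have "\<dots> \<le> (\<Sum>j\<in>{1..d}. \<Sum>i\<in>{..<2*j}. cv.dim (G j i \<union> vconj ` G j i))"
      by (intro sum_mono dim_UN_le) simp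
    also have "\<dots> \<le> (\<Sum>j\<in>{1..d}. \<Sum>i\<in>{..<2*j}. 2 * N)"
    proof (intro sum_mono)
      fix j i assume "j \<in> {1..d}" "i \<in> {..<2*j}"
      then show "cv.dim (G j i \<union> vconj ` G j i) \<le> 2 * N"
        using dimG[of j i] dim_Un_le[of "G j i" "vconj ` G j i"] by auto
    qed
    also have "\<dots> = (\<Sum>j\<in>{1..d}. 2 * j * (2 * N))" by simp
    also have "\<dots> \<le> (\<Sum>j\<in>{1..d}. 2 * d * (2 * N))" by (intro sum_mono) auto
    also have "\<dots> = 4 * d * d * N" by simp
    finally have "real (cdim W) \<le> real (4 * d * d * N)" by (rule of_nat_mono)
    also have "\<dots> = 4 * real d * real d * real N" by simp
    also have "\<dots> \<le> 4 * real d * real d * (1 / \<delta>\<^sup>2)" using Nle by (intro mult_left_mono) auto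
    also have "\<dots> = 4 * real d * real d * (d+1)^4 / \<epsilon>^2"
      using assms(2) by (simp add: \<delta>_def power_divide field_simps power_mult_distrib flip: power_mult)
    also have "\<dots> \<le> 8 * (d+1)^6 / \<epsilon>^2"
    proof -
      have "real d * real d \<le> (real d + 1)^2" by (simp add: power2_eq_square mult_mono)
      then have "4 * real d * real d * (real d + 1)^4 \<le> 4 * (real d + 1)^2 * (real d + 1)^4"
        by (intro mult_right_mono) auto
      also have "\<dots> \<le> 8 * (real d + 1)^6" by (simp add: power_add[symmetric])
      finally have k: "4 * real d * real d * (real d + 1)^4 \<le> 8 * (real d + 1)^6" .
      show ?thesis using divide_right_mono[OF k, of "\<epsilon>^2"] by (simp add: add.commute)
    qed
    finally show ?thesis by simp
  qed
  have part2: "cmod (polyf d T0 T y - polyf d T0 T (orth_proj W y)) \<le> \<epsilon>" if y: "vnorm2 y \<le> 1" for y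
  proof -
    define w where "w = orth_proj W y"
    define z where "z = y - w"
    have wW: "w \<in> W" and zorth: "\<forall>x\<in>W. hinner x z = 0"
      using orth_proj_props[of U y] unfolding WU w_def z_def by auto
    have "hinner w z = 0" using zorth wW by blast
    then have "(vnorm2 y)\<^sup>2 = (vnorm2 w)\<^sup>2 + (vnorm2 z)\<^sup>2"
      using pythag[of w z] by (simp add: z_def)
    moreover have "(vnorm2 y)\<^sup>2 \<le> 1" using y vnorm2_nonneg[of y] by (simp add: power_le_one)
    ultimately have s: "(vnorm2 w)\<^sup>2 + (vnorm2 z)\<^sup>2 \<le> 1" by simp
    have w2: "(vnorm2 w)\<^sup>2 \<le> 1" using s zero_le_power2[of "vnorm2 z"] by linarith
    have z2: "(vnorm2 z)\<^sup>2 \<le> 1" using s zero_le_power2[of "vnorm2 w"] by linarith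
    have wz: "vnorm2 w \<le> 1" "vnorm2 z \<le> 1"
      using power2_le_imp_le[of "vnorm2 w" 1] power2_le_imp_le[of "vnorm2 z" 1] w2 z2 by simp_all
    have UW: "U \<subseteq> W" unfolding WU by (rule cv.span_superset)
    have termb: "cmod (mlf (2*j) (T j) (hyb (phi j y) (phi j w) i)) \<le> \<delta>"
      if j: "j \<in> {1..d}" and i: "i < 2*j" for j i
    proof -
      let ?vs = "hyb (phi j y) (phi j w) i"
      have nk: "vnorm2 (?vs k) \<le> 1" if "k < 2*j" "k \<noteq> i" for k
        using that y wz by (auto simp: hyb_def phi_def vnorm2_vconj)
      define u where "u = vconj (?vs i)"
      have u: "u = (if i < j then z else vconj z)"
        by (simp add: u_def hyb_def phi_def z_def vconj_diff)
      have nu: "vnorm2 u \<le> 1" using wz by (simp add: u vnorm2_vconj)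
      have Ssub: "S j i \<subseteq> W" and Scsub: "vconj ` S j i \<subseteq> W"
      proof -
        have "S j i \<subseteq> G j i" unfolding G_def by (rule cv.span_superset)
        moreover have "G j i \<union> vconj ` G j i \<subseteq> U" unfolding U_def using j i by blast
        ultimately show "S j i \<subseteq> W" "vconj ` S j i \<subseteq> W" using UW by blast+
      qed
      have uorth: "\<forall>s\<in>S j i. hinner s u = 0"
      proof
        fix s assume s: "s \<in> S j i"
        show "hinner s u = 0"
        proof (cases "i < j")
          case True
          then show ?thesis using s Ssub zorth by (auto simp: u)
        next
          case False
          have "hinner s (vconj z) = hinner (vconj (vconj s)) (vconj z)" by simp
          also have "\<dots> = cnj (hinner (vconj s) z)" by (rule hinner_vconj)
          also have "hinner (vconj s) z = 0" using s Scsub zorth by blast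
          finally show ?thesis using False by (simp add: u)
        qed
      qed
      have "cmod (mlf (2*j) (T j) ?vs) \<le> rnorm (2*j - 1) (flat_adj_mul (2*j) i (T j) u)"
        unfolding u_def using i nk by (intro mlf_bound) auto
      also have "\<dots> = sqrt (gfun (2*j) i (T j) u)" by (simp add: rnorm_def gfun_def)
      also have "\<dots> \<le> sqrt (\<delta>\<^sup>2 * (vnorm2 u)\<^sup>2)"
        using adj_small[OF dpos, of "2*j" i "T j" u] uorth by (simp add: S_def)
      also have "\<dots> = \<delta> * vnorm2 u" using dpos vnorm2_nonneg[of u] by (simp add: real_sqrt_mult)
      also have "\<dots> \<le> \<delta>" using nu dpos by (simp add: mult_left_le_one_le vnorm2_nonneg)
      finally show ?thesis .
    qed
    have "polyf d T0 T y - polyf d T0 T w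
        = (\<Sum>j=1..d. mlf (2*j) (T j) (phi j y) - mlf (2*j) (T j) (phi j w))"
      by (simp add: polyf_mlf sum_subtractf)
    also have "\<dots> = (\<Sum>j=1..d. \<Sum>i<2*j. mlf (2*j) (T j) (hyb (phi j y) (phi j w) i))"
      by (simp add: mlf_telescope)
    finally have eq: "polyf d T0 T y - polyf d T0 T w = (\<Sum>j=1..d. \<Sum>i<2*j. mlf (2*j) (T j) (hyb (phi j y) (phi j w) i))" .
    have "cmod (polyf d T0 T y - polyf d T0 T w) \<le> (\<Sum>j=1..d. \<Sum>i<2*j. cmod (mlf (2*j) (T j) (hyb (phi j y) (phi j w) i)))"
      unfolding eq by (rule order_trans[OF norm_sum]) (intro sum_mono norm_sum)
    also have "\<dots> \<le> (\<Sum>j=1..d. \<Sum>i<2*j. \<delta>)"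
      using termb by (intro sum_mono) auto
    also have "\<dots> = \<delta> * real (\<Sum>j=1..d. 2 * j)" by (simp add: sum_distrib_left mult.commute)
    also have "\<dots> = \<delta> * (real d * (real d + 1))" by (simp only: sum_2j) (simp add: algebra_simps)
    also have "\<dots> \<le> \<epsilon>"
    proof -
      have hp: "real d + 1 > 0" by simp
      have e1: "\<delta> = \<epsilon> / ((real d + 1) * (real d + 1))"
        by (simp add: \<delta>_def power2_eq_square algebra_simps)
      have "\<delta> * (real d * (real d + 1)) = \<epsilon> * (real d / (real d + 1))"
      proof -
        have gen: "\<And>a e x::real. a \<noteq> 0 \<Longrightarrow> e / (a * a) * (x * a) = e * (x / a)"
          by (simp add: field_simps)
        show ?thesis unfolding e1 by (rule gen) (use hp in simp)
      qed
      also have "\<dots> \<le> \<epsilon> * 1" using assms(2) by (intro mult_left_mono) auto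
      finally show ?thesis by simp
    qed
    finally show ?thesis by (simp add: w_def)
  qed
  show ?thesis using part1 part2 by blast
qed


end
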